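(* Let $V\sim\mathrm{Exp}(\lambda)$ with rate $\lambda>0$. For $p_0\ge 0$, $r\in[0,1]$, define $$R(p_0,r)=\mathbb{E}\big[(p_0+rV)\,\mathbb{1}_{\{(1-r)V\ge p_0\}}\big]+p_0\,\Pr\big[(1-r)V<p_0\le V\big].$$ Let $u_c^*=\sup_{p_0\ge0,\,r\in[0,1]}R(p_0,r)$ and $u_{c,r=0}^*=\sup_{p_0\ge 0}p_0\Pr[V>p_0]$. Then $u_c^*=\mathbb{E}[V]=1/\lambda$, $u_{c,r=0}^*=\frac{1}{e\lambda}$, hence $\Delta:=u_c^*-u_{c,r=0}^*=\frac{1}{\lambda}\big(1-\frac1e\big)$, and the relative increase $\mathcal{I}:=\Delta/u_{c,r=0}^*$ equals $e-1\approx 1.72$ for all $\lambda\in(1,\infty)$.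
   Context: $R(p_0,r)$ is the creator's expected revenue when a speculator who observes the realized valuation $v$ buys at price $p_0$ iff $(1-r)v\ge p_0$ and resells at $v$ paying royalty $rv$, and otherwise the creator sells directly to the end-buyer at $p_0$ iff $v\ge p_0$. *)

theory Defs
  imports "HOL-Probability.Probability"
begin

definition creator_revenue :: "'a measure \<Rightarrow> ('a \<Rightarrow> real) \<Rightarrow> real \<Rightarrow> real \<Rightarrow> real" where
  "creator_revenue M V p0 r =
     (\<integral>\<omega>. (p0 + r * V \<omega>) * indicator {\<omega>. (1 - r) * V \<omega> \<ge> p0} \<omega> \<partial>M)
     + p0 * measure M {\<omega> \<in> space M. (1 - r) * V \<omega> < p0 \<and> p0 \<le> V \<omega>}"

end

theory Submission
  imports Defs
begin

lemma rev_bound: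
  fixes M :: "'a measure" and V :: "'a \<Rightarrow> real" and l :: real
  assumes P: "prob_space M"
    and l: "l > 0"
    and D: "distributed M lborel V (exponential_density l)"
    and p0: "p0 \<ge> 0" and r0: "0 \<le> r" and r1: "r \<le> 1"
  shows "creator_revenue M V p0 r \<le> (\<integral>\<omega>. V \<omega> \<partial>M)"
proof -
  interpret prob_space M by (rule P)
  have Vm[measurable]: "V \<in> borel_measurable M" using distributed_measurable[OF D] by simp
  have iV: "integrable M V" using erlang_ith_moment_integrable[OF l D, of 1] by simp
  have AEV: "AE x in M. 0 \<le> V x"
    by (subst distributed_AE2[OF D]) (auto simp: erlang_density_def)
  define A where "A = {\<omega>. (1 - r) * V \<omega> \<ge> p0}"
  define B where "B = {\<omega> \<in> space M. (1 - r) * V \<omega> < p0 \<and> p0 \<le> V \<omega>}"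
  have Bm: "B \<in> sets M" unfolding B_def by measurable
  have f1m: "(\<lambda>\<omega>. (p0 + r * V \<omega>) * indicator A \<omega>) \<in> borel_measurable M"
    unfolding A_def by measurable
  have f1i: "integrable M (\<lambda>\<omega>. (p0 + r * V \<omega>) * indicator A \<omega>)"
  proof (rule Bochner_Integration.integrable_bound[where f="\<lambda>x. p0 + \<bar>V x\<bar>"])
    show "integrable M (\<lambda>x. p0 + \<bar>V x\<bar>)" using iV by auto
    show "(\<lambda>\<omega>. (p0 + r * V \<omega>) * indicator A \<omega>) \<in> borel_measurable M" by (rule f1m)
    show "AE x in M. norm ((p0 + r * V x) * indicator A x) \<le> norm (p0 + \<bar>V x\<bar>)"
    proof (rule AE_I2)
      fix x
      have "\<bar>p0 + r * V x\<bar> \<le> p0 + \<bar>V x\<bar>"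
      proof -
        have "\<bar>r * V x\<bar> \<le> \<bar>V x\<bar>" using r0 r1 by (simp add: abs_mult mult_left_le_one_le)
        then show ?thesis using p0 by linarith
      qed
      then show "norm ((p0 + r * V x) * indicator A x) \<le> norm (p0 + \<bar>V x\<bar>)"
        using p0 by (auto simp: indicator_def)
    qed
  qed
  have f2i: "integrable M (\<lambda>\<omega>. p0 * indicator B \<omega>)"
    using Bm by (intro integrable_mult_right integrable_real_indicator) (auto simp: less_top[symmetric])
  have f2: "(\<integral>\<omega>. p0 * indicator B \<omega> \<partial>M) = p0 * measure M B"
    using Bm by simp
  have "creator_revenue M V p0 r
      = (\<integral>\<omega>. (p0 + r * V \<omega>) * indicator A \<omega> \<partial>M) + (\<integral>\<omega>. p0 * indicator B \<omega> \<partial>M)"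
    unfolding creator_revenue_def A_def B_def f2[unfolded B_def] by simp
  also have "\<dots> = (\<integral>\<omega>. (p0 + r * V \<omega>) * indicator A \<omega> + p0 * indicator B \<omega> \<partial>M)"
    using f1i f2i by simp
  also have "\<dots> \<le> (\<integral>\<omega>. V \<omega> \<partial>M)"
  proof (rule integral_mono_AE)
    show "integrable M (\<lambda>\<omega>. (p0 + r * V \<omega>) * indicator A \<omega> + p0 * indicator B \<omega>)"
      using f1i f2i by simp
    show "integrable M V" by (rule iV)
    show "AE x in M. (p0 + r * V x) * indicator A x + p0 * indicator B x \<le> V x"
      using AEV
    proof (rule AE_mp, intro AE_I2 impI)
      fix x assume x: "x \<in> space M" and v: "0 \<le> V x"
      show "(p0 + r * V x) * indicator A x + p0 * indicator B x \<le> V x"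
      proof (cases "x \<in> A")
        case True
        then have "x \<notin> B" unfolding A_def B_def by auto
        with True show ?thesis unfolding A_def by (auto simp: algebra_simps)
      next
        case False
        then show ?thesis using v unfolding B_def by (auto simp: indicator_def)
      qed
    qed
  qed
  finally show ?thesis .
qed

theorem lemma4:
  fixes M :: "'a measure" and V :: "'a \<Rightarrow> real" and l :: real
  assumes "prob_space M"
    and "l > 0"
    and "distributed M lborel V (exponential_density l)"
  defines "uc \<equiv> Sup ((\<lambda>(p0, r). creator_revenue M V p0 r) ` ({0..} \<times> {0..1}))"
    and "uc0 \<equiv> Sup ((\<lambda>p0. p0 * measure M {\<omega> \<in> space M. V \<omega> > p0}) ` {0..})"
  shows "bdd_above ((\<lambda>(p0, r). creator_revenue M V p0 r) ` ({0..} \<times> {0..1}))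
    \<and> bdd_above ((\<lambda>p0. p0 * measure M {\<omega> \<in> space M. V \<omega> > p0}) ` {0..})
    \<and> uc = (\<integral>\<omega>. V \<omega> \<partial>M) \<and> (\<integral>\<omega>. V \<omega> \<partial>M) = 1 / l
    \<and> uc0 = 1 / (exp 1 * l)
    \<and> uc - uc0 = (1 / l) * (1 - 1 / exp 1)
    \<and> (l > 1 \<longrightarrow> (uc - uc0) / uc0 = exp 1 - 1)"
proof -
  interpret prob_space M by (rule assms(1))
  note P = assms(1) and l = assms(2) and D = assms(3)
  let ?S = "(\<lambda>(p0, r). creator_revenue M V p0 r) ` ({0..} \<times> {0..1})"
  let ?T = "(\<lambda>p0. p0 * measure M {\<omega> \<in> space M. V \<omega> > p0}) ` {0..}"
  have EV: "(\<integral>\<omega>. V \<omega> \<partial>M) = 1 / l"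
    using exponential_distributed_expectation[OF l D] by simp
  have Sbd: "\<forall>x\<in>?S. x \<le> (\<integral>\<omega>. V \<omega> \<partial>M)"
    using rev_bound[OF P l D] by auto
  have Smem: "(\<integral>\<omega>. V \<omega> \<partial>M) \<in> ?S"
  proof -
    have "creator_revenue M V 0 1 = (\<integral>\<omega>. V \<omega> \<partial>M)"
      unfolding creator_revenue_def by simp
    then show ?thesis by (force intro!: image_eqI[where x="(0,1)"])
  qed
  have ucv: "uc = (\<integral>\<omega>. V \<omega> \<partial>M)" unfolding uc_def
    by (rule cSup_eq_maximum[OF Smem]) (use Sbd in auto)
  have gt: "\<And>p. p \<ge> 0 \<Longrightarrow> measure M {\<omega> \<in> space M. V \<omega> > p} = exp (- p * l)"
    using exponential_distributedD_gt[OF D _ l] by simp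
  have key: "\<And>p. p \<ge> 0 \<Longrightarrow> p * exp (- p * l) \<le> 1 / (exp 1 * l)"
  proof -
    fix p :: real assume p: "p \<ge> 0"
    have "1 + (p * l - 1) \<le> exp (p * l - 1)" by (rule exp_ge_add_one_self)
    then have "p * l \<le> exp (p * l) / exp 1" by (simp add: exp_diff)
    then have "p * l * exp (- p * l) \<le> exp (p * l) / exp 1 * exp (- p * l)"
      by (rule mult_right_mono) simp
    also have "\<dots> = 1 / exp 1" by (simp add: exp_minus field_simps)
    finally have "p * l * exp (- p * l) \<le> 1 / exp 1" .
    then show "p * exp (- p * l) \<le> 1 / (exp 1 * l)" using l
      by (simp add: field_simps)
  qed
  have Tbd: "\<forall>x\<in>?T. x \<le> 1 / (exp 1 * l)" using key gt by auto
  have Tmem: "1 / (exp 1 * l) \<in> ?T"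
  proof -
    have "(1/l) * measure M {\<omega> \<in> space M. V \<omega> > 1/l} = 1 / (exp 1 * l)"
      using gt[of "1/l"] l by (simp add: exp_minus field_simps)
    then show ?thesis using l by (force intro!: image_eqI[where x="1/l"])
  qed
  have uc0v: "uc0 = 1 / (exp 1 * l)" unfolding uc0_def
    by (rule cSup_eq_maximum[OF Tmem]) (use Tbd in auto)
  have b1: "bdd_above ?S" using Sbd by (intro bdd_aboveI) auto
  have b2: "bdd_above ?T" using Tbd by (intro bdd_aboveI) auto
  have d: "uc - uc0 = (1 / l) * (1 - 1 / exp 1)" using ucv uc0v EV l
    by (simp add: field_simps)
  have "(uc - uc0) / uc0 = exp 1 - 1"
  proof -
    have "uc = 1 / l" using ucv EV by simp
    moreover have "(1 / l - 1 / (exp 1 * l)) / (1 / (exp 1 * l)) = exp 1 - 1"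
      using l by (simp add: field_simps)
    ultimately show ?thesis using uc0v by simp
  qed
  then show ?thesis using b1 b2 ucv EV uc0v d by blast
qed

end
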